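(* Let $n\ge 2$. For every triangulation $T$ of the cyclic polytope $C(n+2,3)$, the graph $\Gamma(T) := ([n], F_1(T)\cap \binom{[n]}{2})$ is a persistent graph on $n$ vertices.
   Context: The cyclic polytope $C(n+2,3)$ is the convex hull of $n+2$ points on the moment curve $t\mapsto(t,t^2,t^3)$, with vertices labelled $0,1,\dots,n+1$ in increasing order of the parameter; faces are identified with their vertex sets. A triangulation of $C(n+2,3)$ is a set $T$ of 3-simplices (4-element subsets of $\{0,\dots,n+1\}$) such that the union of their convex hulls is the polytope and any two of them intersect in a common (possibly empty) face. $F_1(T)$ is the set of 2-element subsets contained in some simplex of $T$; thus $i,j\in[n]$ are adjacent in $\Gamma(T)$ iff $\{i,j\}\subseteq S$ for some $S\in T$. A graph $G=([n],E)$ is persistent if (1) $\{i,i+1\}\in E$ for all $1\le i<n$; (2) (X-property) if $\{a,c\},\{b,d\}\in E$ for $a<b<c<d$ then $\{a,d\}\in E$; (3) (bar-property) for every edge $\{a,b\}\in E$ with $a<b-1$ there is $x$ with $a<x<b$ and $\{a,x\},\{x,b\}\in E$. *)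

theory Defs
  imports "HOL-Analysis.Analysis"
begin

definition moment_pt :: "(nat \<Rightarrow> real) \<Rightarrow> nat \<Rightarrow> real \<times> real \<times> real" where
  "moment_pt t i = (t i, (t i)^2, (t i)^3)"

definition conv_of :: "(nat \<Rightarrow> real) \<Rightarrow> nat set \<Rightarrow> (real \<times> real \<times> real) set" where
  "conv_of t S = convex hull (moment_pt t ` S)"

text \<open>Triangulation of the cyclic polytope C(n+2,3) with vertices 0..n+1
  placed at the strictly increasing parameters t 0 < ... < t (n+1).\<close>
definition cyclic_triangulation :: "nat \<Rightarrow> (nat \<Rightarrow> real) \<Rightarrow> nat set set \<Rightarrow> bool" where
  "cyclic_triangulation n t T \<longleftrightarrow>
     (\<forall>S\<in>T. S \<subseteq> {0..n+1} \<and> card S = 4) \<and>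
     \<Union> (conv_of t ` T) = conv_of t {0..n+1} \<and>
     (\<forall>S\<in>T. \<forall>S'\<in>T. \<exists>F. F \<subseteq> S \<and> F \<subseteq> S' \<and> conv_of t S \<inter> conv_of t S' = conv_of t F)"

definition Gamma_graph :: "nat \<Rightarrow> nat set set \<Rightarrow> nat set set" where
  "Gamma_graph n T = {e. e \<subseteq> {1..n} \<and> card e = 2 \<and> (\<exists>S\<in>T. e \<subseteq> S)}"

definition persistent :: "nat \<Rightarrow> nat set set \<Rightarrow> bool" where
  "persistent n E \<longleftrightarrow>
     (\<forall>e\<in>E. e \<subseteq> {1..n} \<and> card e = 2) \<and>
     (\<forall>i. 1 \<le> i \<and> i < n \<longrightarrow> {i, i+1} \<in> E) \<and>
     (\<forall>a b c d. a < b \<and> b < c \<and> c < d \<and> {a,c} \<in> E \<and> {b,d} \<in> E \<longrightarrow> {a,d} \<in> E) \<and>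
     (\<forall>a b. a + 1 < b \<and> {a,b} \<in> E \<longrightarrow> (\<exists>x. a < x \<and> x < b \<and> {a,x} \<in> E \<and> {x,b} \<in> E))"

end

theory Submission
  imports Defs
begin

definition V :: "real \<Rightarrow> real \<Rightarrow> real \<Rightarrow> real \<Rightarrow> real" where
 "V a b c d = (b-a)*(c-a)*(d-a)*(c-b)*(d-b)*(d-c)"
lemma id0: "V x q y r - V p q y r + V p x y r - V p x q r + V p x q y = 0"
  unfolding V_def by algebra
lemma id1: "V x q y r * p - V p q y r * x + V p x y r * q - V p x q r * y + V p x q y * r = 0"
  unfolding V_def by algebra
lemma id2: "V x q y r * p^2 - V p q y r * x^2 + V p x y r * q^2 - V p x q r * y^2 + V p x q y * r^2 = 0"
  unfolding V_def by algebra
lemma id3: "V x q y r * p^3 - V p q y r * x^3 + V p x y r * q^3 - V p x q r * y^3 + V p x q y * r^3 = 0"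
  unfolding V_def by algebra

lemma V_pos: "a < b \<Longrightarrow> b < c \<Longrightarrow> c < d \<Longrightarrow> V a b c d > 0"
  unfolding V_def by simp

lemma cross_point:
  fixes p x q y r :: real
  assumes "p < x" "x < q" "q < y" "y < r"
  shows "\<exists>s. 0 < s \<and> s < 1 \<and> (1-s) *\<^sub>R (x,x^2,x^3) + s *\<^sub>R (y,y^2,y^3)
           \<in> convex hull {(p,p^2,p^3),(q,q^2,q^3),(r,r^2,r^3)}"
proof -
  define cp where "cp = V x q y r"
  define cx where "cx = V p q y r"
  define cq where "cq = V p x y r"
  define cy where "cy = V p x q r"
  define cr where "cr = V p x q y"
  have pos: "cp > 0" "cx > 0" "cq > 0" "cy > 0" "cr > 0"
    unfolding cp_def cx_def cq_def cy_def cr_def using assms by (auto intro!: V_pos)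
  define S where "S = cx + cy"
  have S0: "S = cp + cq + cr" using id0[of x q y r p] unfolding S_def cp_def cx_def cq_def cy_def cr_def by linarith
  have Spos: "S > 0" using pos S_def by simp
  have e1: "cx * x + cy * y = cp * p + cq * q + cr * r" using id1[of x q y r p] unfolding cp_def cx_def cq_def cy_def cr_def by linarith
  have e2: "cx * x^2 + cy * y^2 = cp * p^2 + cq * q^2 + cr * r^2" using id2[of x q y r p] unfolding cp_def cx_def cq_def cy_def cr_def by linarith
  have e3: "cx * x^3 + cy * y^3 = cp * p^3 + cq * q^3 + cr * r^3" using id3[of x q y r p] unfolding cp_def cx_def cq_def cy_def cr_def by linarith
  define s where "s = cy / S"
  have s1: "1 - s = cx / S" unfolding s_def S_def using Spos S_def by (simp add: field_simps)
  have "(1-s) *\<^sub>R (x,x^2,x^3) + s *\<^sub>R (y,y^2,y^3)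
      = (cp/S) *\<^sub>R (p,p^2,p^3) + (cq/S) *\<^sub>R (q,q^2,q^3) + (cr/S) *\<^sub>R (r,r^2,r^3)"
    unfolding s1 unfolding s_def using e1 e2 e3 Spos
    by (simp add: field_simps)
  moreover have "(cp/S) *\<^sub>R (p,p^2,p^3) + (cq/S) *\<^sub>R (q,q^2,q^3) + (cr/S) *\<^sub>R (r,r^2,r^3)
      \<in> convex hull {(p,p^2,p^3),(q,q^2,q^3),(r,r^2,r^3)}"
  proof -
    have sum1: "cp/S + cq/S + cr/S = 1" using Spos S0 by (simp add: add_divide_distrib[symmetric])
    show ?thesis unfolding convex_hull_3
      apply (rule CollectI)
      apply (rule exI[of _ "cp/S"], rule exI[of _ "cq/S"], rule exI[of _ "cr/S"])
      using pos Spos sum1 by simp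
  qed
  moreover have "0 < s" "s < 1" unfolding s_def S_def using pos by (auto simp: field_simps)
  ultimately show ?thesis by metis
qed

lemma lf_sum:
  fixes t :: "nat \<Rightarrow> real"
  assumes "finite F" "sum l F = 1"
  shows "c0 + c1 * fst (\<Sum>j\<in>F. l j *\<^sub>R moment_pt t j) + c2 * fst (snd (\<Sum>j\<in>F. l j *\<^sub>R moment_pt t j))
     + c3 * snd (snd (\<Sum>j\<in>F. l j *\<^sub>R moment_pt t j))
     = (\<Sum>j\<in>F. l j * (c0 + c1 * t j + c2 * (t j)^2 + c3 * (t j)^3))"
proof -
  have "(\<Sum>j\<in>F. l j * (c0 + c1 * t j + c2 * (t j)^2 + c3 * (t j)^3))
     = c0 * sum l F + c1 * (\<Sum>j\<in>F. l j * t j) + c2 * (\<Sum>j\<in>F. l j * (t j)^2) + c3 * (\<Sum>j\<in>F. l j * (t j)^3)"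
    by (simp add: sum.distrib sum_distrib_left algebra_simps)
  then show ?thesis using assms by (simp add: fst_sum snd_sum moment_pt_def)
qed

lemma inj_mp:
  assumes "strict_mono_on {0..N} t" "F \<subseteq> {0..N}"
  shows "inj_on (moment_pt t) F"
proof
  fix x y assume "x \<in> F" "y \<in> F" "moment_pt t x = moment_pt t y"
  then have "t x = t y" by (simp add: moment_pt_def)
  then show "x = y" using assms \<open>x \<in> F\<close> \<open>y \<in> F\<close> strict_mono_on_eq[OF assms(1)] by blast
qed

lemma rep:
  assumes "strict_mono_on {0..N} t" "F \<subseteq> {0..N}" "y \<in> conv_of t F"
  shows "\<exists>l. (\<forall>j\<in>F. 0 \<le> l j) \<and> sum l F = 1 \<and> y = (\<Sum>j\<in>F. l j *\<^sub>R moment_pt t j)"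
proof -
  have fin: "finite F" using assms(2) finite_subset by blast
  have inj: "inj_on (moment_pt t) F" using inj_mp assms by blast
  from assms(3) obtain u where u: "\<forall>x\<in>moment_pt t ` F. 0 \<le> u x" "sum u (moment_pt t ` F) = 1"
     "(\<Sum>x\<in>moment_pt t ` F. u x *\<^sub>R x) = y"
    unfolding conv_of_def convex_hull_finite[OF finite_imageI[OF fin]] by blast
  show ?thesis
    apply (rule exI[of _ "\<lambda>j. u (moment_pt t j)"])
    using u sum.reindex[OF inj, of u] sum.reindex[OF inj, of "\<lambda>x. u x *\<^sub>R x"] by auto
qed

lemma seg_in:
  assumes "a \<in> F" "d \<in> F" "0 \<le> s" "s \<le> 1"
  shows "(1-s) *\<^sub>R moment_pt t a + s *\<^sub>R moment_pt t d \<in> conv_of t F"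
  unfolding conv_of_def
  by (rule convexD_alt[OF convex_convex_hull]) (auto intro: hull_inc simp: assms)

lemma sign:
  fixes t :: "nat \<Rightarrow> real"
  assumes mono: "strict_mono_on {0..N} t" and ad: "a < d" "d \<le> N" and s: "0 < s" "s < 1"
    and F: "F \<subseteq> {0..N}" and W: "(1-s) *\<^sub>R moment_pt t a + s *\<^sub>R moment_pt t d \<in> conv_of t F"
  shows "{a,d} \<subseteq> F \<or> (\<exists>i\<in>F. \<exists>j\<in>F. \<exists>k\<in>F. i < a \<and> a < j \<and> j < d \<and> d < k)"
proof -
  have fin: "finite F" using F finite_subset by blast
  obtain l where l0: "\<forall>j\<in>F. 0 \<le> l j" and l1: "sum l F = 1"
    and Weq: "(1-s) *\<^sub>R moment_pt t a + s *\<^sub>R moment_pt t d = (\<Sum>j\<in>F. l j *\<^sub>R moment_pt t j)"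
    using rep[OF mono F W] by blast
  define ta where "ta = t a"
  define td where "td = t d"
  have aN: "a \<in> {0..N}" "d \<in> {0..N}" using ad by auto
  have tad: "ta < td" unfolding ta_def td_def using strict_mono_on_less[OF mono aN] ad by simp
  have key: "(\<Sum>j\<in>F. l j * (c0 + c1 * t j + c2 * (t j)^2 + c3 * (t j)^3))
     = (1-s) * (c0 + c1 * ta + c2 * ta^2 + c3 * ta^3) + s * (c0 + c1 * td + c2 * td^2 + c3 * td^3)" for c0 c1 c2 c3
  proof -
    have "(\<Sum>j\<in>F. l j * (c0 + c1 * t j + c2 * (t j)^2 + c3 * (t j)^3))
      = c0 + c1 * fst (\<Sum>j\<in>F. l j *\<^sub>R moment_pt t j) + c2 * fst (snd (\<Sum>j\<in>F. l j *\<^sub>R moment_pt t j))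
     + c3 * snd (snd (\<Sum>j\<in>F. l j *\<^sub>R moment_pt t j))" using lf_sum[OF fin l1] by simp
    also have "\<dots> = (1-s) * (c0 + c1 * ta + c2 * ta^2 + c3 * ta^3) + s * (c0 + c1 * td + c2 * td^2 + c3 * td^3)"
      unfolding Weq[symmetric] by (simp add: moment_pt_def ta_def td_def algebra_simps)
    finally show ?thesis .
  qed
  have Q: "(\<Sum>j\<in>F. l j * ((t j - ta) * (t j - td))) = 0"
  proof -
    have "(\<Sum>j\<in>F. l j * ((t j - ta) * (t j - td))) = (\<Sum>j\<in>F. l j * (ta*td + (-(ta+td)) * t j + 1 * (t j)^2 + 0 * (t j)^3))"
      by (rule sum.cong) (auto simp: algebra_simps power2_eq_square)
    also have "\<dots> = 0" unfolding key by (simp add: algebra_simps power2_eq_square)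
    finally show ?thesis .
  qed
  have C1: "(\<Sum>j\<in>F. l j * ((t j - ta) * (t j - td)^2)) = 0"
  proof -
    have "(\<Sum>j\<in>F. l j * ((t j - ta) * (t j - td)^2)) = (\<Sum>j\<in>F. l j * ((-(ta*td^2)) + (td^2 + 2*ta*td) * t j + (-(ta+2*td)) * (t j)^2 + 1 * (t j)^3))"
      by (rule sum.cong) (auto simp: algebra_simps power2_eq_square power3_eq_cube)
    also have "\<dots> = 0" unfolding key by (simp add: algebra_simps power2_eq_square power3_eq_cube)
    finally show ?thesis .
  qed
  have C2: "(\<Sum>j\<in>F. l j * ((t j - ta)^2 * (t j - td))) = 0"
  proof -
    have "(\<Sum>j\<in>F. l j * ((t j - ta)^2 * (t j - td))) = (\<Sum>j\<in>F. l j * ((-(ta^2*td)) + (ta^2 + 2*ta*td) * t j + (-(2*ta+td)) * (t j)^2 + 1 * (t j)^3))"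
      by (rule sum.cong) (auto simp: algebra_simps power2_eq_square power3_eq_cube)
    also have "\<dots> = 0" unfolding key by (simp add: algebra_simps power2_eq_square power3_eq_cube)
    finally show ?thesis .
  qed
  have L1: "(\<Sum>j\<in>F. l j * t j) = (1-s) * ta + s * td"
    using key[of 0 1 0 0] by simp
  show ?thesis
  proof (cases "\<exists>j0\<in>F. j0 \<noteq> a \<and> j0 \<noteq> d \<and> l j0 > 0")
    case False
    then have z: "\<forall>j\<in>F. j \<noteq> a \<longrightarrow> j \<noteq> d \<longrightarrow> l j = 0" using l0 by force
    have "a \<in> F"
    proof (rule ccontr)
      assume na: "a \<notin> F"
      have "(\<Sum>j\<in>F. l j * (t j - td)) = 0"
        by (rule sum.neutral) (use z na td_def in force)
      moreover have "(\<Sum>j\<in>F. l j * (t j - td)) = (1-s) * (ta - td)"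
      proof -
        have "(\<Sum>j\<in>F. l j * (t j - td)) = (\<Sum>j\<in>F. l j * t j) - td * sum l F"
          by (simp add: right_diff_distrib sum_subtractf sum_distrib_left mult.commute)
        then show ?thesis using L1 l1 by (simp add: algebra_simps)
      qed
      ultimately show False using s tad by simp
    qed
    moreover have "d \<in> F"
    proof (rule ccontr)
      assume na: "d \<notin> F"
      have "(\<Sum>j\<in>F. l j * (t j - ta)) = 0"
        by (rule sum.neutral) (use z na ta_def in force)
      moreover have "(\<Sum>j\<in>F. l j * (t j - ta)) = s * (td - ta)"
      proof -
        have "(\<Sum>j\<in>F. l j * (t j - ta)) = (\<Sum>j\<in>F. l j * t j) - ta * sum l F"
          by (simp add: right_diff_distrib sum_subtractf sum_distrib_left mult.commute)
        then show ?thesis using L1 l1 by (simp add: algebra_simps)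
      qed
      ultimately show False using s tad by simp
    qed
    ultimately show ?thesis by simp
  next
    case True
    then obtain j0 where j0: "j0 \<in> F" "j0 \<noteq> a" "j0 \<noteq> d" "l j0 > 0" by blast
    have j0N: "j0 \<in> {0..N}" using j0 F by auto
    have "t j0 \<noteq> ta" "t j0 \<noteq> td" unfolding ta_def td_def
      using strict_mono_on_eq[OF mono j0N aN(1)] strict_mono_on_eq[OF mono j0N aN(2)] j0 by auto
    then have nz: "l j0 * ((t j0 - ta) * (t j0 - td)) \<noteq> 0" using j0 by simp
    have "\<exists>j\<in>F. l j * ((t j - ta) * (t j - td)) < 0"
    proof (rule ccontr)
      assume "\<not> ?thesis"
      then have "\<forall>j\<in>F. 0 \<le> l j * ((t j - ta) * (t j - td))" by force
      then have "\<forall>j\<in>F. l j * ((t j - ta) * (t j - td)) = 0"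
        using sum_nonneg_eq_0_iff[OF fin, of "\<lambda>j. l j * ((t j - ta) * (t j - td))"] Q by blast
      then show False using nz j0 by blast
    qed
    then obtain j where j: "j \<in> F" "l j * ((t j - ta) * (t j - td)) < 0" by blast
    have lj: "l j > 0" using j l0 by (cases "l j = 0") force+
    have "(t j - ta) * (t j - td) < 0" using j lj by (simp add: mult_less_0_iff)
    then have tj: "ta < t j" "t j < td" using tad by (auto simp: mult_less_0_iff)
    have jN: "j \<in> {0..N}" using j F by auto
    have jad: "a < j" "j < d" using tj strict_mono_on_less[OF mono aN(1) jN] strict_mono_on_less[OF mono jN aN(2)]
      unfolding ta_def td_def by auto
    have "\<exists>i\<in>F. i < a \<and> l i > 0"
    proof (rule ccontr)
      assume na: "\<not> ?thesis"
      have nn: "\<forall>i\<in>F. 0 \<le> l i * ((t i - ta) * (t i - td)^2)"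
      proof
        fix i assume i: "i \<in> F"
        show "0 \<le> l i * ((t i - ta) * (t i - td)^2)"
        proof (cases "i < a")
          case True then have "l i = 0" using na i l0 by force
          then show ?thesis by simp
        next
          case False
          have iN: "i \<in> {0..N}" using i F by auto
          have "ta \<le> t i" using False strict_mono_on_less_eq[OF mono aN(1) iN] unfolding ta_def by simp
          then show ?thesis using l0 i by simp
        qed
      qed
      then have "\<forall>i\<in>F. l i * ((t i - ta) * (t i - td)^2) = 0"
        using sum_nonneg_eq_0_iff[OF fin, of "\<lambda>i. l i * ((t i - ta) * (t i - td)^2)"] C1 by blast
      moreover have "l j * ((t j - ta) * (t j - td)^2) > 0" using lj tj by simp
      ultimately show False using j by force
    qed
    then obtain i where i: "i \<in> F" "i < a" by blast
    have "\<exists>k\<in>F. d < k \<and> l k > 0"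
    proof (rule ccontr)
      assume na: "\<not> ?thesis"
      have nn: "\<forall>i\<in>F. l i * ((t i - ta)^2 * (t i - td)) \<le> 0"
      proof
        fix i assume i: "i \<in> F"
        show "l i * ((t i - ta)^2 * (t i - td)) \<le> 0"
        proof (cases "d < i")
          case True then have "l i = 0" using na i l0 by force
          then show ?thesis by simp
        next
          case False
          have iN: "i \<in> {0..N}" using i F by auto
          have "t i \<le> td" using False strict_mono_on_less_eq[OF mono iN aN(2)] unfolding td_def by simp
          then show ?thesis using l0 i by (simp add: mult_nonneg_nonpos)
        qed
      qed
      then have "\<forall>i\<in>F. - (l i * ((t i - ta)^2 * (t i - td))) \<ge> 0" by force
      then have "\<forall>i\<in>F. - (l i * ((t i - ta)^2 * (t i - td))) = 0"
        using sum_nonneg_eq_0_iff[OF fin, of "\<lambda>i. - (l i * ((t i - ta)^2 * (t i - td)))"] C2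
        by (simp add: sum_negf)
      moreover have "l j * ((t j - ta)^2 * (t j - td)) < 0" using lj tj by (simp add: mult_pos_neg)
      ultimately show False using j by force
    qed
    then obtain k where k: "k \<in> F" "d < k" by blast
    show ?thesis using i j jad k by blast
  qed
qed

lemma card5: "a < b \<Longrightarrow> b < c \<Longrightarrow> c < d \<Longrightarrow> d < (e::nat) \<Longrightarrow> {a,b,c,d,e} \<subseteq> S \<Longrightarrow> finite S \<Longrightarrow> card S = 4 \<Longrightarrow> False"
proof -
  assume h: "a < b" "b < c" "c < d" "d < e" "{a,b,c,d,e} \<subseteq> S" "finite S" "card S = 4"
  have "card {a,b,c,d,e} = 5" using h by simp
  moreover have "card {a,b,c,d,e} \<le> card S" using card_mono h by blast
  ultimately show False using h by simp
qed

lemma tri_props: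
  assumes "cyclic_triangulation n t T" "S \<in> T"
  shows "S \<subseteq> {0..n+1}" "card S = 4" "finite S"
  using assms unfolding cyclic_triangulation_def by (auto intro: finite_subset)

lemma nocross:
  assumes mono: "strict_mono_on {0..n+1} t" and tri: "cyclic_triangulation n t T"
    and ST: "S \<in> T" "S' \<in> T" and sub: "{x,y} \<subseteq> S" "{p,q,r} \<subseteq> S'"
    and ord: "p < x" "x < q" "q < y" "y < r"
  shows False
proof -
  note P = tri_props[OF tri ST(1)] and P' = tri_props[OF tri ST(2)]
  have inN: "p \<in> {0..n+1}" "x \<in> {0..n+1}" "q \<in> {0..n+1}" "y \<in> {0..n+1}" "r \<in> {0..n+1}"
    using sub P(1) P'(1) by auto
  have "t p < t x" "t x < t q" "t q < t y" "t y < t r"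
    using ord strict_mono_on_less[OF mono] inN by auto
  then obtain s where s: "0 < s" "s < 1"
    and Wc: "(1-s) *\<^sub>R moment_pt t x + s *\<^sub>R moment_pt t y \<in> conv_of t {p,q,r}"
    using cross_point[of "t p" "t x" "t q" "t y" "t r"] unfolding conv_of_def moment_pt_def by auto
  define W where "W = (1-s) *\<^sub>R moment_pt t x + s *\<^sub>R moment_pt t y"
  have W1: "W \<in> conv_of t S" unfolding W_def by (rule seg_in) (use sub s in auto)
  have "conv_of t {p,q,r} \<subseteq> conv_of t S'" unfolding conv_of_def
    by (rule hull_mono) (use sub in auto)
  then have W2: "W \<in> conv_of t S'" using Wc W_def by auto
  obtain F where F: "F \<subseteq> S" "F \<subseteq> S'" "conv_of t S \<inter> conv_of t S' = conv_of t F"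
    using tri ST unfolding cyclic_triangulation_def by meson
  have WF: "W \<in> conv_of t F" using W1 W2 F(3) by auto
  have FN: "F \<subseteq> {0..n+1}" using F P(1) by auto
  have "x < y" "y \<le> n+1" using ord inN by auto
  from sign[OF mono this s FN WF[unfolded W_def]]
  show False
  proof
    assume "{x,y} \<subseteq> F"
    then have "{p,x,q,y,r} \<subseteq> S'" using F sub by auto
    then show False using card5[OF ord] P' by blast
  next
    assume "\<exists>i\<in>F. \<exists>j\<in>F. \<exists>k\<in>F. i < x \<and> x < j \<and> j < y \<and> y < k"
    then obtain i j k where "i \<in> F" "j \<in> F" "k \<in> F" "i < x" "x < j" "j < y" "y < k" by blast
    then have "{i,x,j,y,k} \<subseteq> S" using F sub by auto
    then show False using card5[OF \<open>i < x\<close> \<open>x < j\<close> \<open>j < y\<close> \<open>y < k\<close>] P by blast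
  qed
qed

lemma cover:
  assumes tri: "cyclic_triangulation n t T" and "z \<in> conv_of t {0..n+1}"
  shows "\<exists>S\<in>T. z \<in> conv_of t S"
  using assms unfolding cyclic_triangulation_def by auto

lemma mid_edge:
  assumes mono: "strict_mono_on {0..n+1} t" and tri: "cyclic_triangulation n t T"
    and ad: "a < d" "d \<le> n+1" and s: "0 < s" "s < 1"
    and ST: "S \<in> T" and W: "(1-s) *\<^sub>R moment_pt t a + s *\<^sub>R moment_pt t d \<in> conv_of t S"
    and other: "\<And>i j k. i < a \<Longrightarrow> a < j \<Longrightarrow> j < d \<Longrightarrow> d < k \<Longrightarrow> {i,j,k} \<subseteq> S \<Longrightarrow> False"
  shows "{a,d} \<subseteq> S"
  using sign[OF mono ad s tri_props(1)[OF tri ST] W] other by blast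

lemma gam: "{u,v} \<in> Gamma_graph n T \<longleftrightarrow> u \<in> {1..n} \<and> v \<in> {1..n} \<and> u \<noteq> v \<and> (\<exists>S\<in>T. {u,v} \<subseteq> S)"
  unfolding Gamma_graph_def by (cases "u = v") auto

lemma finT: assumes "cyclic_triangulation n t T" shows "finite T"
proof -
  have "T \<subseteq> Pow {0..n+1}" using assms unfolding cyclic_triangulation_def by auto
  then show ?thesis using finite_subset by blast
qed

lemma closed_conv: "finite S \<Longrightarrow> closed (conv_of t S)"
  unfolding conv_of_def by (intro compact_imp_closed compact_convex_hull finite_imp_compact) simp

theorem lemma7:
  fixes n :: nat and t :: "nat \<Rightarrow> real" and T :: "nat set set"
  assumes "n \<ge> 2"
    and "strict_mono_on {0..n+1} t"
    and "cyclic_triangulation n t T"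
  shows "persistent n (Gamma_graph n T)"
proof -
  note mono = assms(2) and tri = assms(3)
  have half: "0 < (1/2::real)" "(1/2::real) < 1" by auto
  have midin: "(1 - 1/2) *\<^sub>R moment_pt t a + (1/2) *\<^sub>R moment_pt t d \<in> conv_of t {0..n+1}"
    if "a \<le> n+1" "d \<le> n+1" for a d
    by (rule seg_in) (use that in auto)
  have P1: "\<forall>e\<in>Gamma_graph n T. e \<subseteq> {1..n} \<and> card e = 2" unfolding Gamma_graph_def by auto
  have P2: "{i, i+1} \<in> Gamma_graph n T" if hi: "1 \<le> i" "i < n" for i
  proof -
    obtain S where S: "S \<in> T" "(1 - 1/2) *\<^sub>R moment_pt t i + (1/2) *\<^sub>R moment_pt t (i+1) \<in> conv_of t S"
    proof -
      have "i \<le> n+1" "i+1 \<le> n+1" using hi by auto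
      from cover[OF tri midin[OF this]] show ?thesis using that by blast
    qed
    have "{i,i+1} \<subseteq> S"
      by (rule mid_edge[OF mono tri _ _ half S]) (use hi in auto)
    then show ?thesis unfolding gam using hi S by auto
  qed
  have P3: "{a,d} \<in> Gamma_graph n T"
    if h: "a < b" "b < c" "c < d" "{a,c} \<in> Gamma_graph n T" "{b,d} \<in> Gamma_graph n T" for a b c d
  proof -
    obtain S1 where S1: "S1 \<in> T" "{a,c} \<subseteq> S1" and ac: "a \<in> {1..n}" "c \<in> {1..n}" using h(4) unfolding gam by auto
    obtain S2 where S2: "S2 \<in> T" "{b,d} \<subseteq> S2" and bd: "b \<in> {1..n}" "d \<in> {1..n}" using h(5) unfolding gam by auto
    obtain S where S: "S \<in> T" "(1 - 1/2) *\<^sub>R moment_pt t a + (1/2) *\<^sub>R moment_pt t d \<in> conv_of t S"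
    proof -
      have "a \<le> n+1" "d \<le> n+1" using ac bd by auto
      from cover[OF tri midin[OF this]] show ?thesis using that by blast
    qed
    have "{a,d} \<subseteq> S"
    proof (rule mid_edge[OF mono tri _ _ half S])
      show "a < d" "d \<le> n+1" using h bd by auto
      fix i j k assume o: "i < a" "a < j" "j < d" "d < k" "{i,j,k} \<subseteq> S"
      show False
      proof (cases "j < c")
        case True
        show False by (rule nocross[OF mono tri S1(1) S(1) S1(2) o(5)]) (use o True h in auto)
      next
        case False
        show False by (rule nocross[OF mono tri S2(1) S(1) S2(2) o(5)]) (use o False h in auto)
      qed
    qed
    then show ?thesis unfolding gam using ac bd h S by auto
  qed
  have P4: "\<exists>x. a < x \<and> x < b \<and> {a,x} \<in> Gamma_graph n T \<and> {x,b} \<in> Gamma_graph n T"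
    if h: "a + 1 < b" "{a,b} \<in> Gamma_graph n T" for a b
  proof -
    obtain S0 where S0: "S0 \<in> T" "{a,b} \<subseteq> S0" and ab: "a \<in> {1..n}" "b \<in> {1..n}" using h(2) unfolding gam by auto
    define M where "M = (1 - 1/2) *\<^sub>R moment_pt t a + (1/2) *\<^sub>R moment_pt t b"
    have Min: "M \<in> conv_of t {0..n+1}" unfolding M_def using midin ab by auto
    define U where "U = \<Union> {conv_of t S | S. S \<in> T \<and> M \<notin> conv_of t S}"
    have "closed U" unfolding U_def
    proof (rule closed_Union)
      have "{conv_of t S | S. S \<in> T \<and> M \<notin> conv_of t S} \<subseteq> conv_of t ` T" by auto
      then show "finite {conv_of t S | S. S \<in> T \<and> M \<notin> conv_of t S}"
        using finT[OF tri] finite_subset by blast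
      show "\<forall>X\<in>{conv_of t S | S. S \<in> T \<and> M \<notin> conv_of t S}. closed X"
        using closed_conv tri_props(3)[OF tri] by blast
    qed
    moreover have "M \<notin> U" unfolding U_def by auto
    ultimately obtain e where e: "e > 0" "ball M e \<subseteq> - U"
      using open_contains_ball[of "- U"] by blast
    define P where "P = moment_pt t (a+1)"
    define \<delta> where "\<delta> = min (1/2) (e / (2 * (norm (M - P) + 1)))"
    have npos: "2 * (norm (M - P) + 1) > 0" by (simp add: add_nonneg_pos)
    have dpos: "\<delta> > 0" "\<delta> \<le> 1/2" unfolding \<delta>_def using e npos by (auto simp del: divide_const_simps)
    define Q where "Q = (1 - \<delta>) *\<^sub>R M + \<delta> *\<^sub>R P"
    have "M - Q = \<delta> *\<^sub>R (M - P)" unfolding Q_def by (simp add: algebra_simps)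
    then have "dist M Q = \<delta> * norm (M - P)" using dpos by (simp add: dist_norm)
    also have "\<dots> \<le> (e / (2 * (norm (M - P) + 1))) * norm (M - P)"
      unfolding \<delta>_def by (intro mult_right_mono) auto
    also have "\<dots> < e"
    proof -
      have N: "norm (M - P) \<ge> 0" by simp
      have "e * norm (M - P) < e * (2 * (norm (M - P) + 1))" using e(1) N by (intro mult_strict_left_mono) (auto simp: add_nonneg_pos)
      then have "e * norm (M - P) / (2 * (norm (M - P) + 1)) < e" using pos_divide_less_eq[OF npos] by blast
      then show ?thesis by simp
    qed
    finally have "Q \<in> ball M e" by simp
    then have QU: "Q \<notin> U" using e by auto
    have Pin: "P \<in> conv_of t {0..n+1}" unfolding P_def conv_of_def
      by (rule hull_inc) (use ab h in auto)
    have "Q \<in> conv_of t {0..n+1}" unfolding Q_def conv_of_def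
      by (rule convexD_alt[OF convex_convex_hull]) (use Min Pin dpos in \<open>auto simp: conv_of_def\<close>)
    then obtain S where S: "S \<in> T" "Q \<in> conv_of t S" using cover[OF tri] by blast
    have MS: "M \<in> conv_of t S" using QU S unfolding U_def by blast
    have abS: "{a,b} \<subseteq> S"
    proof (rule mid_edge[OF mono tri _ _ half S(1) MS[unfolded M_def]])
      show "a < b" "b \<le> n+1" using h ab by auto
      fix i j k assume o: "i < a" "a < j" "j < b" "b < k" "{i,j,k} \<subseteq> S"
      show False by (rule nocross[OF mono tri S0(1) S(1) S0(2) o(5)]) (use o in auto)
    qed
    have SN: "S \<subseteq> {0..n+1}" "finite S" using tri_props[OF tri S(1)] by auto
    obtain l where l0: "\<forall>j\<in>S. 0 \<le> l j" and l1: "sum l S = 1" and Qeq: "Q = (\<Sum>j\<in>S. l j *\<^sub>R moment_pt t j)"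
      using rep[OF mono SN(1) S(2)] by blast
    define ta where "ta = t a"
    define tb where "tb = t b"
    have "(\<Sum>j\<in>S. l j * ((t j - ta) * (t j - tb)))
        = (\<Sum>j\<in>S. l j * (ta*tb + (-(ta+tb)) * t j + 1 * (t j)^2 + 0 * (t j)^3))"
      by (rule sum.cong) (auto simp: algebra_simps power2_eq_square)
    also have "\<dots> = ta*tb + (-(ta+tb)) * fst Q + 1 * fst (snd Q) + 0 * snd (snd Q)"
      unfolding Qeq using lf_sum[OF SN(2) l1, of "ta*tb" "-(ta+tb)" t 1 0] by simp
    also have "\<dots> = \<delta> * ((t (a+1) - ta) * (t (a+1) - tb))"
      unfolding Q_def M_def P_def by (simp add: moment_pt_def ta_def tb_def algebra_simps power2_eq_square field_simps)
    finally have sumneg: "(\<Sum>j\<in>S. l j * ((t j - ta) * (t j - tb))) = \<delta> * ((t (a+1) - ta) * (t (a+1) - tb))" .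
    have inN: "a \<in> {0..n+1}" "a+1 \<in> {0..n+1}" "b \<in> {0..n+1}" using ab by auto
    have "t a < t (a+1)" "t (a+1) < t b" using strict_mono_on_less[OF mono] inN h by auto
    then have "(t (a+1) - ta) * (t (a+1) - tb) < 0" unfolding ta_def tb_def by (simp add: mult_pos_neg)
    then have "(\<Sum>j\<in>S. l j * ((t j - ta) * (t j - tb))) < 0" using sumneg dpos by (simp add: mult_pos_neg)
    then obtain j where j: "j \<in> S" "l j * ((t j - ta) * (t j - tb)) < 0"
      using sum_nonneg[of S "\<lambda>j. l j * ((t j - ta) * (t j - tb))"] by (meson not_less)
    have lj: "l j > 0" using j l0 by (cases "l j = 0") force+
    have "(t j - ta) * (t j - tb) < 0" using j lj by (simp add: mult_less_0_iff)
    then have tj: "ta < t j" "t j < tb" using \<open>t a < t (a+1)\<close> \<open>t (a+1) < t b\<close> unfolding ta_def tb_def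
      by (auto simp: mult_less_0_iff)
    have jN: "j \<in> {0..n+1}" using j SN by auto
    have jab: "a < j" "j < b" using tj strict_mono_on_less[OF mono inN(1) jN] strict_mono_on_less[OF mono jN inN(3)]
      unfolding ta_def tb_def by auto
    show ?thesis
      apply (rule exI[of _ j])
      unfolding gam using jab ab abS j S by auto
  qed
  show ?thesis unfolding persistent_def
  proof (intro conjI)
    show "\<forall>i. 1 \<le> i \<and> i < n \<longrightarrow> {i, i + 1} \<in> Gamma_graph n T" using P2 by blast
    show "\<forall>a b c d. a < b \<and> b < c \<and> c < d \<and> {a, c} \<in> Gamma_graph n T \<and> {b, d} \<in> Gamma_graph n T \<longrightarrow> {a, d} \<in> Gamma_graph n T"
      using P3 by blast
    show "\<forall>a b. a + 1 < b \<and> {a, b} \<in> Gamma_graph n T \<longrightarrow> (\<exists>x. a < x \<and> x < b \<and> {a, x} \<in> Gamma_graph n T \<and> {x, b} \<in> Gamma_graph n T)"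
      using P4 by blast
  qed (rule P1)
qed

end
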